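(* Let $d\ge 1$ and let $D$ be a collection of at most $d$ simplices over $[n]$, each of dimension at most $d$. Then every $(d-1)$-cycle supported on $K(D)$ is a $(d-1)$-boundary of $K(D)$; that is, every such cycle $Z$ can be written as $Z=\sum_{\sigma\in D,\ \dim\sigma=d} c_\sigma\,\partial\sigma$ with $c_\sigma\in\mathbb F$. Equivalently, $\tilde H_{d-1}(K(D))=0$.
   Context: Fix a field $\mathbb F$ and an integer $n\ge 1$. A $d$-simplex is a subset $\sigma\subseteq[n]$ with $|\sigma|=d+1$, oriented by listing its elements in increasing order $s_1<\dots<s_{d+1}$; the empty set is the unique $(-1)$-simplex. A simplicial complex is a family of simplices closed under taking subsets (faces). For a set $S$ of simplices, $K(S)$ denotes the simplicial complex consisting of all subsets of members of $S$. A $d$-chain is a formal $\mathbb F$-linear combination of $d$-simplices; its support $\mathrm{Supp}$ is the set of simplices with nonzero coefficient, and it is supported on a complex $K$ if its support lies in $K$. The boundary operator is $\partial\sigma=\sum_{i=1}^{d+1}(-1)^{i-1}(\sigma\setminus\{s_i\})$, extended linearly (so the boundary of a vertex is the empty simplex; reduced homology convention). A $d$-cycle is a $d$-chain $Z$ with $\partial Z=0$; it is a $d$-boundary of $K$ if $Z=\partial B$ for some $(d+1)$-chain $B$ supported on $K$. $\tilde H_d(K)$ is the quotient of the space of $d$-cycles supported on $K$ by the space of $d$-boundaries of $K$. *)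

theory Defs
  imports Main
begin

text \<open>Simplices over [n] = {1..n} are finite sets of naturals contained in {1..n};
  a k-simplex has cardinality k+1 (the empty set is the (-1)-simplex).\<close>

definition simplex :: "nat \<Rightarrow> nat set \<Rightarrow> bool" where
  "simplex n \<sigma> \<longleftrightarrow> \<sigma> \<subseteq> {1..n}"

definition cplx :: "nat set set \<Rightarrow> nat set set" where
  "cplx S = {\<tau>. \<exists>\<sigma>\<in>S. \<tau> \<subseteq> \<sigma>}"

text \<open>A chain all of whose support simplices lie in [n] and have cardinality m
  (i.e. an (m-1)-chain).\<close>
definition chain :: "nat \<Rightarrow> nat \<Rightarrow> (nat set \<Rightarrow> 'a::field) \<Rightarrow> bool" where
  "chain n m c \<longleftrightarrow> (\<forall>\<sigma>. c \<sigma> \<noteq> 0 \<longrightarrow> simplex n \<sigma> \<and> card \<sigma> = m)"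

definition supported_on :: "(nat set \<Rightarrow> 'a::field) \<Rightarrow> nat set set \<Rightarrow> bool" where
  "supported_on c K \<longleftrightarrow> (\<forall>\<sigma>. c \<sigma> \<noteq> 0 \<longrightarrow> \<sigma> \<in> K)"

text \<open>For \<sigma> = insert v \<tau> with v \<notin> \<tau>, v is the i-th element of \<sigma>
  with i - 1 = card {x \<in> \<tau>. x < v}, so \<partial>\<sigma> contributes (-1)^(i-1) to \<tau>.\<close>
definition bd :: "nat \<Rightarrow> (nat set \<Rightarrow> 'a::field) \<Rightarrow> nat set \<Rightarrow> 'a" where
  "bd n c \<tau> = (\<Sum>v\<in>{1..n} - \<tau>. (-1) ^ card {x\<in>\<tau>. x < v} * c (insert v \<tau>))"

definition is_cycle :: "nat \<Rightarrow> nat \<Rightarrow> nat set set \<Rightarrow> (nat set \<Rightarrow> 'a::field) \<Rightarrow> bool" where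
  "is_cycle n m K Z \<longleftrightarrow> chain n m Z \<and> supported_on Z K \<and> bd n Z = (\<lambda>_. 0)"

definition is_boundary :: "nat \<Rightarrow> nat \<Rightarrow> nat set set \<Rightarrow> (nat set \<Rightarrow> 'a::field) \<Rightarrow> bool" where
  "is_boundary n m K Z \<longleftrightarrow>
     (\<exists>B. chain n (m + 1) B \<and> supported_on B K \<and> Z = bd n B)"

end

theory Submission
  imports Defs
begin

lemma card_lt_insert:
  assumes "u \<notin> \<tau>" "(u::nat) < v"
  shows "card {x\<in>insert u \<tau>. x < v} = Suc (card {x\<in>\<tau>. x < v})"
proof -
  have "{x\<in>insert u \<tau>. x < v} = insert u {x\<in>\<tau>. x < v}" using assms by auto
  moreover have "finite {x\<in>\<tau>. x < (v::nat)}" by (rule finite_subset[of _ "{..<v}"]) auto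
  ultimately show ?thesis using assms by simp
qed

lemma card_lt_insert2:
  assumes "(v::nat) \<le> u"
  shows "{x\<in>insert u \<tau>. x < v} = {x\<in>\<tau>. x < v}"
  using assms by auto

lemma bd_add: "bd n (\<lambda>x. f x + g x) = (\<lambda>\<tau>. bd n f \<tau> + bd n g \<tau>)"
  unfolding bd_def by (auto simp: sum.distrib algebra_simps)

lemma bd_diff: "bd n (\<lambda>x. f x - g x) = (\<lambda>\<tau>. bd n f \<tau> - bd n g \<tau>)"
  unfolding bd_def by (auto simp: sum_subtractf algebra_simps)

lemma bd_zero: "bd n (\<lambda>_. 0::'a::field) = (\<lambda>_. 0)"
  unfolding bd_def by auto

lemma bd_nz:
  assumes "bd n c \<tau> \<noteq> 0"
  obtains v where "v \<in> {1..n} - \<tau>" "c (insert v \<tau>) \<noteq> 0"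
proof -
  from assms obtain v where "v \<in> {1..n} - \<tau>"
      "(-1) ^ card {x\<in>\<tau>. x < v} * c (insert v \<tau>) \<noteq> 0"
    unfolding bd_def by (meson sum.not_neutral_contains_not_neutral)
  then show ?thesis using that by auto
qed

lemma bd_chain:
  assumes "chain n m c"
  shows "chain n (m - 1) (bd n c)"
  unfolding chain_def
proof (intro allI impI)
  fix \<tau> assume "bd n c \<tau> \<noteq> 0"
  then obtain v where v: "v \<in> {1..n} - \<tau>" "c (insert v \<tau>) \<noteq> 0" by (rule bd_nz)
  then have "simplex n (insert v \<tau>)" "card (insert v \<tau>) = m"
    using assms unfolding chain_def by auto
  moreover have "finite \<tau>" using calculation(1) unfolding simplex_def
    by (meson finite_atLeastAtMost finite_subset subset_insertI2 subset_refl)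
  ultimately show "simplex n \<tau> \<and> card \<tau> = m - 1"
    using v unfolding simplex_def by auto
qed

lemma bd_supp:
  assumes "supported_on c (cplx S)"
  shows "supported_on (bd n c) (cplx S)"
  unfolding supported_on_def
proof (intro allI impI)
  fix \<tau> assume "bd n c \<tau> \<noteq> 0"
  then obtain v where v: "v \<in> {1..n} - \<tau>" "c (insert v \<tau>) \<noteq> 0" by (rule bd_nz)
  then have "insert v \<tau> \<in> cplx S" using assms unfolding supported_on_def by auto
  then show "\<tau> \<in> cplx S" unfolding cplx_def by auto
qed

lemma bd_bd: "bd n (bd n c) \<tau> = (0::'a::field)"
proof -
  define R where "R = {1..n} - \<tau>"
  define s where "s = (\<lambda>(\<tau>::nat set) v. (-1::'a)^card {x\<in>\<tau>. x<v})"
  define g where "g = (\<lambda>v u. s \<tau> v * s (insert v \<tau>) u * c (insert u (insert v \<tau>)))"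
  have fin: "finite R" by (simp add: R_def)
  have eq: "\<And>v. {1..n} - insert v \<tau> = R - {v}" by (auto simp: R_def)
  have 1: "bd n (bd n c) \<tau> = (\<Sum>v\<in>R. \<Sum>u\<in>R-{v}. g v u)"
    unfolding bd_def R_def[symmetric] eq g_def s_def
    by (simp add: sum_distrib_left mult.assoc)
  have 2: "(\<Sum>u\<in>R-{v}. g v u) = (\<Sum>u\<in>R. if u<v then g v u else 0) + (\<Sum>u\<in>R. if v<u then g v u else 0)"
    for v
  proof -
    have "(\<Sum>u\<in>R-{v}. g v u) = (\<Sum>u\<in>R-{v}. (if u<v then g v u else 0) + (if v<u then g v u else 0))"
      by (rule sum.cong) auto
    also have "\<dots> = (\<Sum>u\<in>R. (if u<v then g v u else 0) + (if v<u then g v u else 0))"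
      by (rule sum.mono_neutral_left) (use fin in auto)
    finally show ?thesis by (simp add: sum.distrib)
  qed
  have 3: "(\<Sum>v\<in>R. \<Sum>u\<in>R. if v<u then g v u else 0) = (\<Sum>v\<in>R. \<Sum>u\<in>R. if u<v then g u v else 0)"
    by (rule sum.swap)
  have 4: "g u v = - g v u" if "u<v" "u \<in> R" "v\<in>R" for u v
  proof -
    have "s (insert u \<tau>) v = - s \<tau> v"
      using card_lt_insert[of u \<tau> v] that unfolding s_def R_def by auto
    moreover have "s (insert v \<tau>) u = s \<tau> u"
      using card_lt_insert2[of u v \<tau>] that unfolding s_def by auto
    ultimately show ?thesis unfolding g_def by (simp add: insert_commute)
  qed
  have "bd n (bd n c) \<tau> = (\<Sum>v\<in>R. (\<Sum>u\<in>R. if u<v then g v u else 0) + (\<Sum>u\<in>R. if v<u then g v u else 0))"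
    unfolding 1 using 2 by simp
  also have "\<dots> = (\<Sum>v\<in>R. \<Sum>u\<in>R. if u<v then g v u + g u v else 0)"
    unfolding sum.distrib 3 by (simp add: sum.distrib[symmetric] if_distrib cong: if_cong)
  also have "\<dots> = 0"
    by (rule sum.neutral, rule ballI, rule sum.neutral) (use 4 in auto)
  finally show ?thesis .
qed


lemma cone:
  fixes Z :: "nat set \<Rightarrow> 'a::field"
  assumes \<sigma>: "\<sigma> \<subseteq> {1..n}" and m: "m \<ge> 1" and ch: "chain n m Z"
    and sp: "supported_on Z (cplx {\<sigma>})" and cy: "bd n Z = (\<lambda>_. 0)"
  shows "\<exists>B. chain n (m + 1) B \<and> supported_on B (cplx {\<sigma>}) \<and> Z = bd n B"
proof (cases "\<sigma> = {}")
  case True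
  have "Z = (\<lambda>_. 0)"
  proof
    fix \<tau> show "Z \<tau> = 0"
    proof (rule ccontr)
      assume "Z \<tau> \<noteq> 0"
      then have "\<tau> \<subseteq> \<sigma>" "card \<tau> = m" using sp ch unfolding supported_on_def chain_def cplx_def by auto
      then show False using True m by auto
    qed
  qed
  then show ?thesis by (intro exI[of _ "\<lambda>_. 0"]) (auto simp: chain_def supported_on_def bd_zero)
next
  case False
  have finS: "finite \<sigma>" using \<sigma> finite_subset by blast
  define v where "v = Min \<sigma>"
  have v\<sigma>: "v \<in> \<sigma>" using False finS unfolding v_def by auto
  have vmin: "\<And>x. x \<in> \<sigma> \<Longrightarrow> v \<le> x" using finS unfolding v_def by auto
  have vn: "v \<in> {1..n}" using v\<sigma> \<sigma> by auto
  have supp: "\<And>\<tau>. Z \<tau> \<noteq> 0 \<Longrightarrow> \<tau> \<subseteq> \<sigma>" using sp unfolding supported_on_def cplx_def by auto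
  define B where "B = (\<lambda>\<rho>. if v \<in> \<rho> then Z (\<rho> - {v}) else 0)"
  have "chain n (m+1) B"
    unfolding chain_def
  proof (intro allI impI)
    fix \<rho> assume "B \<rho> \<noteq> 0"
    then have r: "v \<in> \<rho>" "Z (\<rho> - {v}) \<noteq> 0" unfolding B_def by (auto split: if_splits)
    then have "simplex n (\<rho> - {v})" "card (\<rho> - {v}) = m" using ch unfolding chain_def by auto
    moreover have "finite (\<rho> - {v})" using calculation(1) unfolding simplex_def
      using finite_subset by blast
    moreover have "\<rho> = insert v (\<rho> - {v})" using r by auto
    ultimately show "simplex n \<rho> \<and> card \<rho> = m + 1" using r vn unfolding simplex_def
      by (metis Diff_iff card.insert insert_subset singletonI Suc_eq_plus1)
  qed
  moreover have "supported_on B (cplx {\<sigma>})"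
    unfolding supported_on_def cplx_def B_def using supp v\<sigma> by (auto split: if_splits)
  moreover have "Z = bd n B"
  proof
    fix \<tau>
    show "Z \<tau> = bd n B \<tau>"
    proof (cases "v \<in> \<tau>")
      case False
      have vin: "v \<in> {1..n} - \<tau>" using vn False by auto
      have "bd n B \<tau> = (-1) ^ card {x\<in>\<tau>. x < v} * B (insert v \<tau>)
          + (\<Sum>u\<in>{1..n} - \<tau> - {v}. (-1) ^ card {x\<in>\<tau>. x < u} * B (insert u \<tau>))"
        unfolding bd_def by (rule sum.remove[OF _ vin]) simp
      also have "(\<Sum>u\<in>{1..n} - \<tau> - {v}. (-1) ^ card {x\<in>\<tau>. x < u} * B (insert u \<tau>)) = 0"
        by (rule sum.neutral) (use False in \<open>auto simp: B_def\<close>)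
      also have "B (insert v \<tau>) = Z \<tau>" using False by (simp add: B_def)
      also have "(-1) ^ card {x\<in>\<tau>. x < v} * Z \<tau> = Z \<tau>"
      proof (cases "Z \<tau> = 0")
        case False
        then have "{x\<in>\<tau>. x < v} = {}" using supp vmin by force
        then show ?thesis by (metis card.empty power_0 mult_1)
      qed simp
      finally show ?thesis by simp
    next
      case True
      note vt = this
      define \<tau>' where "\<tau>' = \<tau> - {v}"
      have tt: "insert v \<tau>' = \<tau>" "v \<notin> \<tau>'" using vt by (auto simp: \<tau>'_def)
      have eqs: "{1..n} - \<tau>' = insert v ({1..n} - \<tau>)" using vt vn by (auto simp: \<tau>'_def)
      have "0 = bd n Z \<tau>'" using cy by simp
      also have "\<dots> = (-1) ^ card {x\<in>\<tau>'. x < v} * Z \<tau>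
          + (\<Sum>u\<in>{1..n} - \<tau>. (-1) ^ card {x\<in>\<tau>'. x < u} * Z (insert u \<tau>'))"
        unfolding bd_def eqs by (subst sum.insert) (auto simp: tt vt)
      finally have e: "(\<Sum>u\<in>{1..n} - \<tau>. (-1) ^ card {x\<in>\<tau>'. x < u} * Z (insert u \<tau>'))
                       = - ((-1) ^ card {x\<in>\<tau>'. x < v} * Z \<tau>)"
        by (simp add: eq_neg_iff_add_eq_0 add.commute)
      have "bd n B \<tau> = (\<Sum>u\<in>{1..n} - \<tau>. - ((-1) ^ card {x\<in>\<tau>'. x < u} * Z (insert u \<tau>')))"
        unfolding bd_def
      proof (rule sum.cong[OF refl])
        fix u assume u: "u \<in> {1..n} - \<tau>"
        then have uv: "u \<noteq> v" using vt by auto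
        have B1: "B (insert u \<tau>) = Z (insert u \<tau>')" using vt uv
          unfolding B_def \<tau>'_def by (simp add: insert_Diff_if)
        show "(-1) ^ card {x\<in>\<tau>. x < u} * B (insert u \<tau>) = - ((-1) ^ card {x\<in>\<tau>'. x < u} * Z (insert u \<tau>'))"
        proof (cases "Z (insert u \<tau>') = 0")
          case False
          then have "u \<in> \<sigma>" using supp by auto
          then have "v < u" using vmin uv by force
          then have "card {x\<in>\<tau>. x < u} = Suc (card {x\<in>\<tau>'. x < u})"
            using card_lt_insert[of v \<tau>' u] tt by simp
          then show ?thesis using B1 by simp
        qed (simp add: B1)
      qed
      also have "\<dots> = (-1) ^ card {x\<in>\<tau>'. x < v} * Z \<tau>"
        by (simp only: sum_negf e minus_minus)
      also have "\<dots> = Z \<tau>"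
      proof (cases "Z \<tau> = 0")
        case False
        then have "{x\<in>\<tau>'. x < v} = {}" using supp vmin unfolding \<tau>'_def by force
        then show ?thesis by (metis card.empty power_0 mult_1)
      qed simp
      finally show ?thesis by simp
    qed
  qed
  ultimately show ?thesis by blast
qed


lemma chain_add: "chain n m f \<Longrightarrow> chain n m g \<Longrightarrow> chain n m (\<lambda>x. f x + g x)"
  unfolding chain_def by (metis add.right_neutral add_0)
lemma chain_diff: "chain n m f \<Longrightarrow> chain n m g \<Longrightarrow> chain n m (\<lambda>x. f x - g x)"
  unfolding chain_def by (metis diff_zero diff_self)
lemma supp_add: "supported_on f K \<Longrightarrow> supported_on g K \<Longrightarrow> supported_on (\<lambda>x. f x + g x) K"
  unfolding supported_on_def by (metis add.right_neutral add_0)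
lemma supp_diff: "supported_on f K \<Longrightarrow> supported_on g K \<Longrightarrow> supported_on (\<lambda>x. f x - g x) K"
  unfolding supported_on_def by (metis diff_zero diff_self)
lemma supp_mono: "supported_on f K \<Longrightarrow> K \<subseteq> K' \<Longrightarrow> supported_on f K'"
  unfolding supported_on_def by auto

lemma empty_case:
  fixes Z :: "nat set \<Rightarrow> 'a::field"
  assumes "supported_on Z (cplx {})"
  shows "\<exists>B. chain n (m + 1) B \<and> supported_on B (cplx {}) \<and> Z = bd n B"
proof -
  have "Z = (\<lambda>_. 0)" using assms unfolding supported_on_def cplx_def by auto
  then show ?thesis by (intro exI[of _ "\<lambda>_. 0"]) (auto simp: chain_def supported_on_def bd_zero)
qed

lemma main:
  fixes Z :: "nat set \<Rightarrow> 'a::field"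
  shows "finite D \<Longrightarrow> card D \<le> k \<Longrightarrow> \<forall>\<sigma>\<in>D. \<sigma> \<subseteq> {1..n} \<Longrightarrow> k \<le> m \<Longrightarrow> chain n m Z
    \<Longrightarrow> supported_on Z (cplx D) \<Longrightarrow> bd n Z = (\<lambda>_. 0)
    \<Longrightarrow> \<exists>B. chain n (m + 1) B \<and> supported_on B (cplx D) \<and> Z = bd n B"
proof (induction k arbitrary: D m Z)
  case 0
  then have "D = {}" by simp
  then show ?case using empty_case 0 by blast
next
  case (Suc k)
  show ?case
  proof (cases "D = {}")
    case True
    then show ?thesis using empty_case Suc by blast
  next
    case False
    then obtain \<sigma> where \<sigma>D: "\<sigma> \<in> D" by blast
    define D' where "D' = D - {\<sigma>}"
    have DD: "D = insert \<sigma> D'" using \<sigma>D by (auto simp: D'_def)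
    have finD': "finite D'" using Suc.prems by (simp add: D'_def)
    have cD': "card D' \<le> k" using Suc.prems \<sigma>D by (simp add: D'_def)
    have D'n: "\<forall>\<tau>\<in>D'. \<tau> \<subseteq> {1..n}" using Suc.prems by (auto simp: D'_def)
    have \<sigma>n: "\<sigma> \<subseteq> {1..n}" using Suc.prems \<sigma>D by auto
    have m1: "m \<ge> 1" "k \<le> m - 1" using Suc.prems by auto
    define A where "A = (\<lambda>\<tau>. if \<tau> \<in> cplx D' then Z \<tau> else 0)"
    define Bz where "Bz = (\<lambda>\<tau>. if \<tau> \<in> cplx D' then 0 else Z \<tau>)"
    have ZAB: "Z = (\<lambda>\<tau>. A \<tau> + Bz \<tau>)" unfolding A_def Bz_def by auto
    have chA: "chain n m A" using Suc.prems unfolding chain_def A_def by auto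
    have chB: "chain n m Bz" using Suc.prems unfolding chain_def Bz_def by auto
    have spA: "supported_on A (cplx D')" unfolding supported_on_def A_def by auto
    have spB: "supported_on Bz (cplx {\<sigma>})"
      using Suc.prems(6) unfolding supported_on_def Bz_def DD cplx_def by auto
    define W where "W = bd n A"
    have bdZ: "\<And>\<tau>. bd n A \<tau> + bd n Bz \<tau> = 0"
      using Suc.prems(7) unfolding ZAB bd_add by meson
    have WB: "\<And>\<tau>. W \<tau> = - bd n Bz \<tau>" unfolding W_def using bdZ by (simp add: eq_neg_iff_add_eq_0)
    define D'' where "D'' = (\<lambda>\<tau>. \<tau> \<inter> \<sigma>) ` D'"
    have c'': "cplx D'' \<subseteq> cplx D'" "cplx D'' \<subseteq> cplx {\<sigma>}" unfolding D''_def cplx_def by auto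
    have chW: "chain n (m - 1) W" unfolding W_def by (rule bd_chain[OF chA])
    have spW: "supported_on W (cplx D'')"
      unfolding supported_on_def
    proof (intro allI impI)
      fix \<tau> assume "W \<tau> \<noteq> 0"
      then have "\<tau> \<in> cplx D'" "\<tau> \<in> cplx {\<sigma>}"
        using bd_supp[OF spA, of n] bd_supp[OF spB, of n] WB unfolding W_def supported_on_def
        by (metis neg_equal_0_iff_equal)+
      then show "\<tau> \<in> cplx D''" unfolding D''_def cplx_def by auto
    qed
    have cyW: "bd n W = (\<lambda>_. 0)" unfolding W_def using bd_bd by blast
    have "\<exists>C. chain n (m - 1 + 1) C \<and> supported_on C (cplx D'') \<and> W = bd n C"
      by (rule Suc.IH) (use finD' cD' D'n m1 chW spW cyW card_image_le[of D' "\<lambda>\<tau>. \<tau> \<inter> \<sigma>"]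
         in \<open>auto simp: D''_def\<close>)
    then obtain C where C: "chain n m C" "supported_on C (cplx D'')" "W = bd n C"
      using m1 by auto
    have "\<exists>E. chain n (m + 1) E \<and> supported_on E (cplx D') \<and> (\<lambda>\<tau>. A \<tau> - C \<tau>) = bd n E"
      by (rule Suc.IH) (use finD' cD' D'n m1 chain_diff[OF chA C(1)]
        supp_diff[OF spA supp_mono[OF C(2) c''(1)]] C(3) in \<open>auto simp: bd_diff W_def\<close>)
    then obtain E where E: "chain n (m + 1) E" "supported_on E (cplx D')" "(\<lambda>\<tau>. A \<tau> - C \<tau>) = bd n E"
      by blast
    have "\<exists>F. chain n (m + 1) F \<and> supported_on F (cplx {\<sigma>}) \<and> (\<lambda>\<tau>. Bz \<tau> + C \<tau>) = bd n F"
      by (rule cone[OF \<sigma>n m1(1) chain_add[OF chB C(1)] supp_add[OF spB supp_mono[OF C(2) c''(2)]]])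
        (use WB C(3) in \<open>auto simp: bd_add\<close>)
    then obtain F where F: "chain n (m + 1) F" "supported_on F (cplx {\<sigma>})" "(\<lambda>\<tau>. Bz \<tau> + C \<tau>) = bd n F"
      by blast
    have sub: "cplx D' \<subseteq> cplx D" "cplx {\<sigma>} \<subseteq> cplx D" unfolding DD cplx_def by auto
    have "Z = bd n (\<lambda>\<tau>. E \<tau> + F \<tau>)"
    proof
      fix \<tau>
      have "A \<tau> - C \<tau> = bd n E \<tau>" "Bz \<tau> + C \<tau> = bd n F \<tau>" using E(3) F(3) by metis+
      then show "Z \<tau> = bd n (\<lambda>\<tau>. E \<tau> + F \<tau>) \<tau>" unfolding bd_add ZAB by (simp add: algebra_simps)
    qed
    then show ?thesis
      using chain_add[OF E(1) F(1)] supp_add[OF supp_mono[OF E(2) sub(1)] supp_mono[OF F(2) sub(2)]]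
      by blast
  qed
qed

theorem lemma3p1:
  fixes n d :: nat and D :: "nat set set" and Z :: "nat set \<Rightarrow> 'a::field"
  assumes "d \<ge> 1"
    and "\<forall>\<sigma>\<in>D. simplex n \<sigma> \<and> card \<sigma> \<le> d + 1"
    and "card D \<le> d"
    and "is_cycle n d (cplx D) Z"
  shows "is_boundary n d (cplx D) Z \<and>
         (\<exists>c. Z = bd n (\<lambda>\<sigma>. if \<sigma> \<in> D \<and> card \<sigma> = d + 1 then c \<sigma> else 0))"
proof -
  have Dn: "\<forall>\<sigma>\<in>D. \<sigma> \<subseteq> {1..n}" using assms(2) unfolding simplex_def by auto
  have finD: "finite D" by (rule finite_subset[of _ "Pow {1..n}"]) (use Dn in auto)
  obtain B where B: "chain n (d + 1) B" "supported_on B (cplx D)" "Z = bd n B"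
    using main[OF finD assms(3) Dn le_refl, of Z] assms(4) unfolding is_cycle_def by blast
  have "B = (\<lambda>\<sigma>. if \<sigma> \<in> D \<and> card \<sigma> = d + 1 then B \<sigma> else 0)"
  proof
    fix \<rho>
    show "B \<rho> = (if \<rho> \<in> D \<and> card \<rho> = d + 1 then B \<rho> else 0)"
    proof (cases "B \<rho> = 0")
      case False
      then obtain \<sigma> where \<sigma>: "\<sigma> \<in> D" "\<rho> \<subseteq> \<sigma>" using B(2) unfolding supported_on_def cplx_def by auto
      have cr: "card \<rho> = d + 1" using False B(1) unfolding chain_def by auto
      have "finite \<sigma>" using \<sigma>(1) Dn finite_subset by blast
      moreover have "card \<sigma> \<le> card \<rho>" using cr assms(2) \<sigma>(1) by auto
      ultimately have "\<rho> = \<sigma>" using \<sigma>(2) card_seteq by blast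
      then show ?thesis using \<sigma>(1) cr by simp
    qed simp
  qed
  then show ?thesis using B unfolding is_boundary_def by metis
qed

end
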